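(* Let $X\subseteq\mathbb{R}^n$ be a nonempty closed convex set with $0\in X$, $\|\cdot\|$ the Euclidean norm, $D(x\|x')=\tfrac12\|x-x'\|^2$, and suppose $\max_{x,x'\in X}D(x\|x')\le F^2$. Let $\tau\in\mathbb{N}$ with $\tau\ge1$, $T\in\mathbb{N}$, and let $f_1,\dots,f_{T+\tau}:\mathbb{R}^n\to\mathbb{R}$ be convex differentiable functions with $\|\nabla f_t(x)\|\le L$ for all $x\in X$ and all $t$. Run delayed stochastic gradient descent: $x_1=\dots=x_{\tau+1}=0$, $g_t=\nabla f_t(x_t)$, and for $t=\tau+1,\dots,T+\tau$, $x_{t+1}=\operatorname{argmin}_{x\in X}\|x-(x_t-\eta_t g_{t-\tau})\|$, with $\eta_t=\sigma/\sqrt{t-\tau}$ for a constant $\sigma>0$. Let $x^*\in X$ be a minimizer over $X$ of the average risk $f^*(x)=\frac1T\sum_{t=1}^T f_t(x)$, and let $R[X]=\sum_{t=1}^T\big(f_t(x_t)-f_t(x^* )\big)$. Then $$R[X]\le \sigma L^2\sqrt T+F^2\frac{\sqrt T}{\sigma}+L^2\frac{\sigma\tau^2}{2}+2L^2\sigma\tau\sqrt T,$$ and consequently, for $\sigma^2=\frac{F^2}{2\tau L^2}$ and $T\ge\tau^2$, $$R[X]\le 4FL\sqrt{\tau T}.$$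
   Context: Delayed stochastic gradient descent updates the parameter with the gradient computed $\tau$ steps earlier, then projects onto $X$. "Lipschitz continuous with constant $L$" for the cost functions means the gradient bound $\|\nabla f_t(x)\|\le L$. *)

theory Defs
  imports "HOL-Analysis.Analysis"
begin

end

theory Submission imports Defs begin
lemma conv_grad:
  fixes f :: "'a::real_inner \<Rightarrow> real"
  assumes cv: "convex_on UNIV f" and d: "(f has_derivative (\<lambda>h. g \<bullet> h)) (at y)"
  shows "f y + g \<bullet> (z - y) \<le> f z"
proof -
  define \<phi> where "\<phi> = (\<lambda>s::real. f (y + s *\<^sub>R (z - y)))"
  have "convex_on UNIV \<phi>"
  proof (rule convex_onI)
    fix t a b :: real assume "t > 0" "t < 1"
    have "y + ((1 - t) *\<^sub>R a + t *\<^sub>R b) *\<^sub>R (z - y) = (1 - t) *\<^sub>R (y + a *\<^sub>R (z - y)) + t *\<^sub>R (y + b *\<^sub>R (z - y))"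
      by (simp add: algebra_simps)
    then show "\<phi> ((1 - t) *\<^sub>R a + t *\<^sub>R b) \<le> (1 - t) * \<phi> a + t * \<phi> b"
      unfolding \<phi>_def using convex_onD[OF cv, of t] \<open>t>0\<close> \<open>t<1\<close> by simp
  qed simp
  have l: "((\<lambda>s::real. y + s *\<^sub>R (z - y)) has_derivative (\<lambda>s. s *\<^sub>R (z - y))) (at 0)"
    by (auto intro!: derivative_eq_intros)
  have d0: "(f has_derivative (\<lambda>h. g \<bullet> h)) (at (y + 0 *\<^sub>R (z - y)))" using d by simp
  have "(\<phi> has_derivative (\<lambda>s. g \<bullet> (s *\<^sub>R (z - y)))) (at 0)"
    unfolding \<phi>_def using has_derivative_compose[OF l d0] by (simp add: o_def)
  then have "(\<phi> has_field_derivative (g \<bullet> (z - y))) (at 0)"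
  proof -
    have eq: "(\<lambda>s. g \<bullet> (s *\<^sub>R (z - y))) = (*) (g \<bullet> (z - y))" by (rule ext) simp
    show ?thesis using \<open>(\<phi> has_derivative _) _\<close> unfolding has_field_derivative_def eq .
  qed
  then have "\<phi> 1 - \<phi> 0 \<ge> (g \<bullet> (z - y)) * (1 - 0)"
    using convex_on_imp_above_tangent[OF \<open>convex_on UNIV \<phi>\<close>, of 0 1] by auto
  then show ?thesis unfolding \<phi>_def by simp
qed

lemma sum_inv_sqrt: "(\<Sum>k=1..n. 1 / sqrt (real k)) \<le> 2 * sqrt (real n)"
proof (induction n)
  case 0 then show ?case by simp
next
  case (Suc n)
  have a: "sqrt (real n) * sqrt (real n + 1) * 2 + 1 \<le> 2 * (real n + 1)"
  proof -
    have "0 \<le> (sqrt (real n + 1) - sqrt (real n))\<^sup>2" by simp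
    then show ?thesis by (simp add: power2_eq_square algebra_simps)
  qed
  have p: "sqrt (real n + 1) > 0" by simp
  have "2 * sqrt (real n) + 1 / sqrt (real n + 1) \<le> 2 * sqrt (real n + 1)"
  proof -
    have "(2 * sqrt (real n) + 1 / sqrt (real n + 1)) * sqrt (real n + 1) = sqrt (real n) * sqrt (real n + 1) * 2 + 1"
      using p by (simp add: field_simps)
    also have "\<dots> \<le> 2 * sqrt (real n + 1) * sqrt (real n + 1)"
    proof -
      have "sqrt (real n + 1) * sqrt (real n + 1) = real n + 1" by simp
      then show ?thesis using a by (simp add: mult.assoc)
    qed
    finally show ?thesis using p by (meson mult_le_cancel_right_pos)
  qed
  then show ?case using Suc by (simp add: add.commute)
qed

lemma tele:
  fixes D a :: "nat \<Rightarrow> real"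
  assumes "\<And>t. 1 \<le> t \<Longrightarrow> t \<le> Suc n \<Longrightarrow> 0 \<le> D t \<and> D t \<le> M"
    and "\<And>t. a t \<le> a (Suc t)" and "0 \<le> a 0"
  shows "(\<Sum>t=1..n. (D t - D (Suc t)) * a t) \<le> a n * (M - D (Suc n))"
  using assms(1)
proof (induction n)
  case 0 then show ?case using assms(3) by (simp add: mult_nonneg_nonneg)
next
  case (Suc n)
  have IH: "(\<Sum>t=1..n. (D t - D (Suc t)) * a t) \<le> a n * (M - D (Suc n))"
    using Suc.IH Suc.prems by simp
  have "a n * (M - D (Suc n)) \<le> a (Suc n) * (M - D (Suc n))"
    using assms(2) Suc.prems[of "Suc n"] by (intro mult_right_mono) auto
  then show ?case using IH by (simp add: algebra_simps)
qed

lemma chain_norm: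
  fixes x :: "nat \<Rightarrow> 'a::real_normed_vector"
  shows "norm (x t - x (t + m)) \<le> (\<Sum>i<m. norm (x (t + i + 1) - x (t + i)))"
proof (induction m)
  case 0 then show ?case by simp
next
  case (Suc m)
  have e: "x t - x (t + Suc m) = (x t - x (t + m)) + (x (t + m) - x (t + m + 1))" by simp
  have "norm (x t - x (t + Suc m)) \<le> norm (x t - x (t + m)) + norm (x (t + m) - x (t + m + 1))"
    unfolding e by (rule norm_triangle_ineq)
  also have "norm (x (t + m) - x (t + m + 1)) = norm (x (t + m + 1) - x (t + m))"
    by (rule norm_minus_commute)
  finally have "norm (x t - x (t + Suc m)) \<le> norm (x t - x (t + m)) + norm (x (t + m + 1) - x (t + m))" .
  then show ?case using Suc by simp
qed

theorem theorem2:
  fixes X :: "'a::euclidean_space set"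
    and f :: "nat \<Rightarrow> 'a \<Rightarrow> real"
    and grad :: "nat \<Rightarrow> 'a \<Rightarrow> 'a"
    and x :: "nat \<Rightarrow> 'a"
    and xstar :: 'a
    and F L \<sigma> :: real
    and \<tau> T :: nat
  assumes X_nonempty: "X \<noteq> {}"
    and X_closed: "closed X"
    and X_convex: "convex X"
    and X_zero: "0 \<in> X"
    and F_nonneg: "F \<ge> 0"
    and diam: "\<forall>y\<in>X. \<forall>y'\<in>X. (1/2) * (norm (y - y'))\<^sup>2 \<le> F\<^sup>2"
    and tau_pos: "\<tau> \<ge> 1"
    and f_convex: "\<forall>t\<in>{1..T+\<tau>}. convex_on UNIV (f t)"
    and f_grad: "\<forall>t\<in>{1..T+\<tau>}. \<forall>y. (f t has_derivative (\<lambda>h. grad t y \<bullet> h)) (at y)"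
    and grad_bound: "\<forall>t\<in>{1..T+\<tau>}. \<forall>y\<in>X. norm (grad t y) \<le> L"
    and sigma_pos: "\<sigma> > 0"
    and x_init: "\<forall>t\<in>{1..\<tau>+1}. x t = 0"
    and x_step: "\<forall>t\<in>{\<tau>+1..T+\<tau>}.
        x (t + 1) = closest_point X (x t - (\<sigma> / sqrt (real (t - \<tau>))) *\<^sub>R grad (t - \<tau>) (x (t - \<tau>)))"
    and xstar_in: "xstar \<in> X"
    and xstar_min: "\<forall>y\<in>X. (1 / real T) * (\<Sum>t=1..T. f t xstar) \<le> (1 / real T) * (\<Sum>t=1..T. f t y)"
  shows "(\<Sum>t=1..T. f t (x t) - f t xstar)
           \<le> \<sigma> * L\<^sup>2 * sqrt (real T) + F\<^sup>2 * sqrt (real T) / \<sigma>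
             + L\<^sup>2 * \<sigma> * (real \<tau>)\<^sup>2 / 2 + 2 * L\<^sup>2 * \<sigma> * real \<tau> * sqrt (real T)
       \<and> ((\<sigma>\<^sup>2 = F\<^sup>2 / (2 * real \<tau> * L\<^sup>2) \<and> T \<ge> \<tau>\<^sup>2)
           \<longrightarrow> (\<Sum>t=1..T. f t (x t) - f t xstar) \<le> 4 * F * L * sqrt (real \<tau> * real T))"
proof -
  define g where "g t = grad t (x t)" for t
  define D where "D t = (norm (x (t + \<tau>) - xstar))\<^sup>2" for t
  define b where "b j = (if j \<le> \<tau> then 0 else \<sigma> * L / sqrt (real (j - \<tau>)))" for j
  have xX: "x t \<in> X" if "1 \<le> t" "t \<le> T + \<tau> + 1" for t
  proof (cases "t \<le> \<tau> + 1")
    case True then show ?thesis using x_init X_zero that by auto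
  next
    case False
    define s where "s = t - 1"
    have s: "t = s + 1" "s \<in> {\<tau>+1..T+\<tau>}" using that False unfolding s_def by auto
    then show ?thesis using x_step closest_point_in_set[OF X_closed X_nonempty] by auto
  qed
  have gb: "norm (g t) \<le> L" if "t \<in> {1..T+\<tau>}" for t
    using grad_bound xX that unfolding g_def by auto
  have L0: "L \<ge> 0" using order_trans[OF norm_ge_zero gb[of 1]] tau_pos by auto
  have step: "x (t + \<tau> + 1) = closest_point X (x (t + \<tau>) - (\<sigma> / sqrt (real t)) *\<^sub>R g t)"
    if "t \<in> {1..T}" for t
    using x_step[rule_format, of "t + \<tau>"] that unfolding g_def by auto
  have proj: "norm (closest_point X u - z) \<le> norm (u - z)" if "z \<in> X" for u z
    using closest_point_lipschitz[OF X_convex X_closed X_nonempty, of u z] closest_point_self[OF that]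
    by (simp add: dist_norm)
  have bnn: "b j \<ge> 0" for j unfolding b_def using sigma_pos L0 by auto
  have delta: "norm (x (j + 1) - x j) \<le> b j" if "j \<in> {1..T+\<tau>}" for j
  proof (cases "j \<le> \<tau>")
    case True then show ?thesis using x_init that bnn[of j] by auto
  next
    case False
    define k where "k = j - \<tau>"
    have k: "j = k + \<tau>" "k \<in> {1..T}" using that False unfolding k_def by auto
    have xj: "x j \<in> X" using xX that by auto
    have e: "x (j + 1) = closest_point X (x j - (\<sigma> / sqrt (real k)) *\<^sub>R g k)"
      using step[OF k(2)] k(1) by simp
    have "norm (x (j + 1) - x j) \<le> norm ((x j - (\<sigma> / sqrt (real k)) *\<^sub>R g k) - x j)"
      unfolding e by (rule proj[OF xj])
    also have "\<dots> = (\<sigma> / sqrt (real k)) * norm (g k)" using sigma_pos by simp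
    also have "\<dots> \<le> (\<sigma> / sqrt (real k)) * L"
      using gb[of k] k sigma_pos by (intro mult_left_mono) auto
    finally show ?thesis unfolding b_def using False k by simp
  qed
  have per: "f t (x t) - f t xstar \<le> L * (\<Sum>i<\<tau>. b (t + i)) + (D t - D (Suc t)) * (sqrt (real t) / (2 * \<sigma>))
              + \<sigma> * L\<^sup>2 / 2 * (1 / sqrt (real t))" if t: "t \<in> {1..T}" for t
  proof -
    have tr: "t \<in> {1..T+\<tau>}" using t by auto
    have a: "f t (x t) - f t xstar \<le> g t \<bullet> (x t - xstar)"
      using conv_grad[of "f t" "g t" "x t" xstar] f_convex f_grad tr unfolding g_def by (auto simp: inner_diff_right)
    have sp: "g t \<bullet> (x t - xstar) = g t \<bullet> (x t - x (t + \<tau>)) + g t \<bullet> (x (t + \<tau>) - xstar)"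
      by (simp add: inner_diff_right)
    have c: "g t \<bullet> (x t - x (t + \<tau>)) \<le> L * (\<Sum>i<\<tau>. b (t + i))"
    proof -
      have "g t \<bullet> (x t - x (t + \<tau>)) \<le> norm (g t) * norm (x t - x (t + \<tau>))"
        by (rule norm_cauchy_schwarz)
      also have "\<dots> \<le> L * norm (x t - x (t + \<tau>))"
        using gb[OF tr] by (intro mult_right_mono) auto
      also have "\<dots> \<le> L * (\<Sum>i<\<tau>. norm (x (t + i + 1) - x (t + i)))"
        using chain_norm[of x t \<tau>] L0 by (intro mult_left_mono) auto
      also have "\<dots> \<le> L * (\<Sum>i<\<tau>. b (t + i))"
        using L0 t delta by (intro mult_left_mono sum_mono) auto
      finally show ?thesis .
    qed
    define \<eta> where "\<eta> = \<sigma> / sqrt (real t)"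
    have eta: "\<eta> > 0" unfolding \<eta>_def using sigma_pos t by auto
    define u where "u = x (t + \<tau>) - xstar"
    have "D (Suc t) \<le> (norm (u - \<eta> *\<^sub>R g t))\<^sup>2"
    proof -
      have "norm (x (t + \<tau> + 1) - xstar) \<le> norm ((x (t + \<tau>) - \<eta> *\<^sub>R g t) - xstar)"
        using step[OF t] proj[OF xstar_in] unfolding \<eta>_def by simp
      then have "(norm (x (t + \<tau> + 1) - xstar))\<^sup>2 \<le> (norm ((x (t + \<tau>) - \<eta> *\<^sub>R g t) - xstar))\<^sup>2"
        by (intro power_mono) auto
      then show ?thesis unfolding D_def u_def by (simp add: algebra_simps)
    qed
    also have "(norm (u - \<eta> *\<^sub>R g t))\<^sup>2 = (u - \<eta> *\<^sub>R g t) \<bullet> (u - \<eta> *\<^sub>R g t)"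
      by (rule power2_norm_eq_inner)
    also have "\<dots> = u \<bullet> u - 2 * \<eta> * (g t \<bullet> u) + \<eta>\<^sup>2 * (g t \<bullet> g t)"
      by (simp add: inner_diff_left inner_diff_right inner_commute[of u "g t"] power2_eq_square algebra_simps)
    also have "\<dots> = D t - 2 * \<eta> * (g t \<bullet> u) + \<eta>\<^sup>2 * (norm (g t))\<^sup>2"
      unfolding D_def u_def by (simp add: power2_norm_eq_inner)
    also have "\<dots> \<le> D t - 2 * \<eta> * (g t \<bullet> u) + \<eta>\<^sup>2 * L\<^sup>2"
    proof -
      have "(norm (g t))\<^sup>2 \<le> L\<^sup>2" using gb[OF tr] by (intro power_mono) auto
      then have "\<eta>\<^sup>2 * (norm (g t))\<^sup>2 \<le> \<eta>\<^sup>2 * L\<^sup>2" by (rule mult_left_mono) simp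
      then show ?thesis by linarith
    qed
    finally have "2 * \<eta> * (g t \<bullet> u) \<le> D t - D (Suc t) + \<eta>\<^sup>2 * L\<^sup>2" by simp
    then have "g t \<bullet> u \<le> (D t - D (Suc t) + \<eta>\<^sup>2 * L\<^sup>2) / (2 * \<eta>)"
      using eta by (simp add: field_simps)
    also have "\<dots> = (D t - D (Suc t)) * (sqrt (real t) / (2 * \<sigma>)) + \<sigma> * L\<^sup>2 / 2 * (1 / sqrt (real t))"
    proof -
      have gen: "\<And>r::real. r > 0 \<Longrightarrow> (D t - D (Suc t) + (\<sigma> / r)\<^sup>2 * L\<^sup>2) / (2 * (\<sigma> / r))
          = (D t - D (Suc t)) * (r / (2 * \<sigma>)) + \<sigma> * L\<^sup>2 / 2 * (1 / r)"
        using sigma_pos by (simp add: field_simps power2_eq_square)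
      show ?thesis unfolding \<eta>_def by (rule gen) (use t in auto)
    qed
    finally have bb: "g t \<bullet> (x (t + \<tau>) - xstar) \<le> \<dots>" unfolding u_def .
    show ?thesis using a sp c bb by linarith
  qed
  have sum1: "(\<Sum>t=1..T. f t (x t) - f t xstar) \<le>
      (\<Sum>t=1..T. L * (\<Sum>i<\<tau>. b (t + i))) + (\<Sum>t=1..T. (D t - D (Suc t)) * (sqrt (real t) / (2 * \<sigma>)))
      + (\<Sum>t=1..T. \<sigma> * L\<^sup>2 / 2 * (1 / sqrt (real t)))"
    using sum_mono[of "{1..T}", OF per] by (simp add: sum.distrib)
  define B where "B = (\<Sum>j=1..T+\<tau>. b j)"
  have B: "B \<le> \<sigma> * L * (2 * sqrt (real T))"
  proof -
    have "B = (\<Sum>j=1+\<tau>..T+\<tau>. b j)"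
      unfolding B_def by (rule sum.mono_neutral_right) (auto simp: b_def)
    also have "\<dots> = (\<Sum>k=1..T. b (k + \<tau>))" by (rule sum.shift_bounds_cl_nat_ivl)
    also have "\<dots> = (\<Sum>k=1..T. \<sigma> * L * (1 / sqrt (real k)))"
      by (rule sum.cong) (auto simp: b_def)
    also have "\<dots> = \<sigma> * L * (\<Sum>k=1..T. 1 / sqrt (real k))" by (simp add: sum_distrib_left)
    also have "\<dots> \<le> \<sigma> * L * (2 * sqrt (real T))"
      using sum_inv_sqrt[of T] sigma_pos L0 by (intro mult_left_mono) auto
    finally show ?thesis .
  qed
  have s1: "(\<Sum>t=1..T. L * (\<Sum>i<\<tau>. b (t + i))) \<le> 2 * L\<^sup>2 * \<sigma> * real \<tau> * sqrt (real T)"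
  proof -
    have "(\<Sum>t=1..T. L * (\<Sum>i<\<tau>. b (t + i))) = L * (\<Sum>i<\<tau>. \<Sum>t=1..T. b (t + i))"
    proof -
      have "(\<Sum>t=1..T. \<Sum>i<\<tau>. b (t + i)) = (\<Sum>i<\<tau>. \<Sum>t=1..T. b (t + i))" by (rule sum.swap)
      then show ?thesis by (simp add: sum_distrib_left[symmetric])
    qed
    also have "\<dots> \<le> L * (\<Sum>i<\<tau>. B)"
    proof (intro mult_left_mono sum_mono L0)
      fix i assume i: "i \<in> {..<\<tau>}"
      have "(\<Sum>t=1..T. b (t + i)) = (\<Sum>j=1+i..T+i. b j)" by (rule sum.shift_bounds_cl_nat_ivl[symmetric])
      also have "\<dots> \<le> B" unfolding B_def
        using i bnn by (intro sum_mono2) auto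
      finally show "(\<Sum>t=1..T. b (t + i)) \<le> B" .
    qed
    also have "\<dots> = L * real \<tau> * B" by simp
    also have "\<dots> \<le> L * real \<tau> * (\<sigma> * L * (2 * sqrt (real T)))"
      using B L0 by (intro mult_left_mono) auto
    finally show ?thesis by (simp add: power2_eq_square algebra_simps)
  qed
  have s2: "(\<Sum>t=1..T. (D t - D (Suc t)) * (sqrt (real t) / (2 * \<sigma>))) \<le> F\<^sup>2 * sqrt (real T) / \<sigma>"
  proof -
    have "(\<Sum>t=1..T. (D t - D (Suc t)) * (sqrt (real t) / (2 * \<sigma>)))
        \<le> sqrt (real T) / (2 * \<sigma>) * (2 * F\<^sup>2 - D (Suc T))"
    proof (rule tele)
      fix t assume "1 \<le> t" "t \<le> Suc T"
      then have "x (t + \<tau>) \<in> X" using xX by auto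
      then have "(1/2) * (norm (x (t + \<tau>) - xstar))\<^sup>2 \<le> F\<^sup>2" using diam xstar_in by blast
      then show "0 \<le> D t \<and> D t \<le> 2 * F\<^sup>2" unfolding D_def by simp
    next
      fix t show "sqrt (real t) / (2 * \<sigma>) \<le> sqrt (real (Suc t)) / (2 * \<sigma>)"
        using sigma_pos by (intro divide_right_mono) auto
    qed simp
    also have "\<dots> \<le> sqrt (real T) / (2 * \<sigma>) * (2 * F\<^sup>2)"
      using sigma_pos unfolding D_def by (intro mult_left_mono) auto
    finally show ?thesis using sigma_pos by (simp add: field_simps)
  qed
  have s3: "(\<Sum>t=1..T. \<sigma> * L\<^sup>2 / 2 * (1 / sqrt (real t))) \<le> \<sigma> * L\<^sup>2 * sqrt (real T)"
  proof -
    have "(\<Sum>t=1..T. \<sigma> * L\<^sup>2 / 2 * (1 / sqrt (real t))) = \<sigma> * L\<^sup>2 / 2 * (\<Sum>t=1..T. 1 / sqrt (real t))"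
      by (simp add: sum_distrib_left)
    also have "\<dots> \<le> \<sigma> * L\<^sup>2 / 2 * (2 * sqrt (real T))"
      using sum_inv_sqrt[of T] sigma_pos by (intro mult_left_mono) auto
    finally show ?thesis by simp
  qed
  have extra: "L\<^sup>2 * \<sigma> * (real \<tau>)\<^sup>2 / 2 \<ge> 0" using sigma_pos by simp
  have main: "(\<Sum>t=1..T. f t (x t) - f t xstar)
      \<le> \<sigma> * L\<^sup>2 * sqrt (real T) + F\<^sup>2 * sqrt (real T) / \<sigma> + 2 * L\<^sup>2 * \<sigma> * real \<tau> * sqrt (real T)"
    using sum1 s1 s2 s3 by linarith
  show ?thesis
  proof (intro conjI impI)
    show "(\<Sum>t=1..T. f t (x t) - f t xstar)
           \<le> \<sigma> * L\<^sup>2 * sqrt (real T) + F\<^sup>2 * sqrt (real T) / \<sigma>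
             + L\<^sup>2 * \<sigma> * (real \<tau>)\<^sup>2 / 2 + 2 * L\<^sup>2 * \<sigma> * real \<tau> * sqrt (real T)"
      using main extra by linarith
  next
    assume h: "\<sigma>\<^sup>2 = F\<^sup>2 / (2 * real \<tau> * L\<^sup>2) \<and> \<tau>\<^sup>2 \<le> T"
    have Lp: "L \<noteq> 0" using h sigma_pos by auto
    have tp: "real \<tau> > 0" using tau_pos by simp
    have F2: "F\<^sup>2 = \<sigma>\<^sup>2 * (2 * real \<tau> * L\<^sup>2)" using h Lp tp by (simp add: field_simps)
    have "F\<^sup>2 = (\<sigma> * L * sqrt (2 * real \<tau>))\<^sup>2" using F2 tp by (simp add: power_mult_distrib)
    then have Fe: "F = \<sigma> * L * sqrt (2 * real \<tau>)"
      using F_nonneg sigma_pos L0 power2_eq_iff_nonneg[of F "\<sigma> * L * sqrt (2 * real \<tau>)"] by simp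
    define s where "s = sqrt (real T)"
    define r where "r = sqrt (real \<tau>)"
    have rr: "r * r = real \<tau>" unfolding r_def by simp
    have s0: "s \<ge> 0" unfolding s_def by simp
    have r1: "r \<ge> 1" unfolding r_def using tau_pos by simp
    have sq2: "sqrt 2 \<ge> 1.375" by (rule real_le_rsqrt) (simp add: power2_eq_square)
    have RHS: "4 * F * L * sqrt (real \<tau> * real T) = \<sigma> * L\<^sup>2 * (4 * sqrt 2 * real \<tau> * s)"
      unfolding Fe s_def
      by (simp add: real_sqrt_mult power2_eq_square algebra_simps)
    have F2': "F\<^sup>2 * sqrt (real T) / \<sigma> = \<sigma> * L\<^sup>2 * (2 * real \<tau> * s)"
      using F2 sigma_pos unfolding s_def by (simp add: field_simps power2_eq_square)
    have k: "s + 2 * real \<tau> * s + 2 * real \<tau> * s \<le> 4 * sqrt 2 * real \<tau> * s"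
    proof -
      have "s \<le> real \<tau> * s" using tau_pos s0 by (simp add: mult_le_cancel_right1)
      moreover have "5.5 * (real \<tau> * s) \<le> 4 * sqrt 2 * (real \<tau> * s)"
        using sq2 tp s0 by (intro mult_right_mono) auto
      moreover have "0 \<le> real \<tau> * s" using s0 by simp
      moreover have e1: "4 * sqrt 2 * real \<tau> * s = 4 * sqrt 2 * (real \<tau> * s)"
        "2 * real \<tau> * s = 2 * (real \<tau> * s)" by (simp_all add: mult.assoc)
      ultimately show ?thesis by linarith
    qed
    have "\<sigma> * L\<^sup>2 * sqrt (real T) + F\<^sup>2 * sqrt (real T) / \<sigma> + 2 * L\<^sup>2 * \<sigma> * real \<tau> * sqrt (real T)
        = \<sigma> * L\<^sup>2 * (s + 2 * real \<tau> * s + 2 * real \<tau> * s)"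
      unfolding F2' by (simp add: s_def algebra_simps)
    also have "\<dots> \<le> \<sigma> * L\<^sup>2 * (4 * sqrt 2 * real \<tau> * s)"
      using k sigma_pos by (intro mult_left_mono) auto
    finally show "(\<Sum>t=1..T. f t (x t) - f t xstar) \<le> 4 * F * L * sqrt (real \<tau> * real T)"
      using main RHS by linarith
  qed
qed

end
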